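(* Let $\Omega$ be a smoothly bounded open subset of $\mathbb{C}$ and let $\Delta=\{(\sigma,\sigma):\sigma\in\partial\Omega\}$ be the diagonal in $\partial\Omega\times\partial\Omega$. Then $\Omega$ is convex if and only if $P_{\Omega}(\sigma,\tau)\geq 0$ for all $(\sigma,\tau)\in(\partial\Omega\times\partial\Omega)\setminus\Delta$.
   Context: An open set $\Omega\subseteq\mathbb{C}$ is smoothly bounded if it is bounded and $\partial\Omega$ is an embedded smooth submanifold of $\mathbb{C}$. Let $n_{\Omega}\colon\partial\Omega\to\mathbb{C}$ denote the outward unit normal vector of $\Omega$. The double-layer potential $P_{\Omega}\colon(\partial\Omega\times\mathbb{C})\setminus\Delta\to\mathbb{R}$ is $P_{\Omega}(\sigma,z)=\frac{1}{\pi}\operatorname{Re}\Big(\frac{n_{\Omega}(\sigma)}{\sigma-z}\Big)$ for $\sigma\in\partial\Omega$, $z\in\mathbb{C}$, $\sigma\neq z$. (The paper phrases the condition as "$P_{\Omega}$ is positive", positive meaning nonnegative.) *)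

theory Defs
  imports "HOL-Analysis.Analysis"
begin

fun iter_pd :: "complex list \<Rightarrow> (complex \<Rightarrow> real) \<Rightarrow> complex \<Rightarrow> real" where
  "iter_pd [] f = f"
| "iter_pd (v # vs) f = (\<lambda>x. deriv (\<lambda>t. iter_pd vs f (x + of_real t * v)) 0)"

definition Cinf_on :: "complex set \<Rightarrow> (complex \<Rightarrow> real) \<Rightarrow> bool" where
  "Cinf_on U f \<longleftrightarrow>
     (\<forall>vs. set vs \<subseteq> {1, \<i>}\<longrightarrow> continuous_on U (iter_pd vs f)) \<and>
     (\<forall>vs v. set vs \<subseteq> {1, \<i>}\<longrightarrow> v \<in> {1, \<i>}\<longrightarrow>
        (\<forall>x\<in>U. (\<lambda>t. iter_pd vs f (x + of_real t * v)) differentiable (at 0)))"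

definition grad :: "(complex \<Rightarrow> real) \<Rightarrow> complex \<Rightarrow> complex" where
  "grad f x = complex_of_real (iter_pd [1] f x) + \<i> * complex_of_real (iter_pd [\<i>] f x)"

definition local_defining_function ::
    "complex set \<Rightarrow> complex \<Rightarrow> complex set \<Rightarrow> (complex \<Rightarrow> real) \<Rightarrow> bool" where
  "local_defining_function \<Omega> p U \<rho> \<longleftrightarrow>
     open U \<and> p \<in> U \<and> Cinf_on U \<rho> \<and> (\<forall>z\<in>U. grad \<rho> z \<noteq> 0) \<and>
     \<Omega> \<inter> U = {z \<in> U. \<rho> z < 0}"

definition smoothly_bounded :: "complex set \<Rightarrow> bool" where
  "smoothly_bounded \<Omega> \<longleftrightarrow> open \<Omega> \<and> bounded \<Omega> \<and>
     (\<forall>p\<in>frontier \<Omega>. \<exists>U \<rho>. local_defining_function \<Omega> p U \<rho>)"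

definition outward_normal :: "complex set \<Rightarrow> complex \<Rightarrow> complex" where
  "outward_normal \<Omega> \<sigma> = (THE n. \<exists>U \<rho>. local_defining_function \<Omega> \<sigma> U \<rho> \<and>
       n = grad \<rho> \<sigma> / complex_of_real (cmod (grad \<rho> \<sigma>)))"

definition double_layer :: "complex set \<Rightarrow> complex \<Rightarrow> complex \<Rightarrow> real" where
  "double_layer \<Omega> \<sigma> z = (1 / pi) * Re (outward_normal \<Omega> \<sigma> / (\<sigma> - z))"

end

theory Submission
  imports Defs "HOL-Analysis.Analysis"
begin


lemma partial_deriv:
  assumes "Cinf_on U \<rho>" "z \<in> U" "v \<in> {1, \<i>}"
  shows "((\<lambda>t. \<rho> (z + of_real t * v)) has_real_derivative iter_pd [v] \<rho> z) (at 0)"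
proof -
  have "(\<lambda>t. iter_pd [] \<rho> (z + of_real t * v)) differentiable (at 0)"
    using assms(1) unfolding Cinf_on_def apply (elim conjE)
    apply (drule spec[of _ "[]"], drule spec[of _ v])
    apply (drule mp, simp)
    apply (drule mp, rule assms(3))
    using assms(2) by blast
  then show ?thesis
    by (simp add: DERIV_deriv_iff_real_differentiable)
qed

lemma cont_partial:
  assumes "Cinf_on U \<rho>" "v \<in> {1, \<i>}"
  shows "continuous_on U (iter_pd [v] \<rho>)"
  using assms(1) unfolding Cinf_on_def apply (elim conjE)
  apply (drule spec[of _ "[v]"])
  apply (drule mp)
  using assms(2) apply simp
  by assumption

lemma cont_rho:
  assumes "Cinf_on U \<rho>"
  shows "continuous_on U \<rho>"
  using assms(1) unfolding Cinf_on_def apply (elim conjE)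
  apply (drule spec[of _ "[]"])
  by simp

lemma frechet:
  assumes C: "Cinf_on U \<rho>" and U: "open U" and p: "p \<in> U"
  shows "(\<rho> has_derivative (\<lambda>h. Re h * iter_pd [1] \<rho> p + Im h * iter_pd [\<i>] \<rho> p)) (at p)"
proof -
  define D1 where "D1 = iter_pd [1] \<rho>"
  define D2 where "D2 = iter_pd [\<i>] \<rho>"
  obtain r where r: "r > 0" "ball p r \<subseteq> U" using U p open_contains_ball by blast
  define X where "X = ball (Re p) (r/2)"
  define Y where "Y = ball (Im p) (r/2)"
  have XY: "Complex x y \<in> U" if "x \<in> X" "y \<in> Y" for x y
  proof -
    have "dist p (Complex x y) \<le> dist (Re p) x + dist (Im p) y"
      using cmod_le[of "p - Complex x y"] by (simp add: dist_norm dist_real_def)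
    also have "\<dots> < r" using that by (simp add: X_def Y_def)
    finally show ?thesis using r by auto
  qed
  have fx: "((\<lambda>x. \<rho> (Complex x (Im p))) has_derivative (\<lambda>tx. tx * D1 p)) (at (Re p) within X)"
  proof -
    have d: "((\<lambda>t. \<rho> (p + of_real t * 1)) has_real_derivative D1 p) (at (Re p + - Re p))"
      using partial_deriv[OF C p, of 1] unfolding D1_def by simp
    have "((\<lambda>x. \<rho> (p + of_real (x + - Re p) * 1)) has_real_derivative D1 p) (at (Re p))"
      using DERIV_shift[THEN iffD1, OF d] by simp
    moreover have "(\<lambda>x. \<rho> (p + of_real (x + - Re p) * 1)) = (\<lambda>x. \<rho> (Complex x (Im p)))"
      by (rule ext, rule arg_cong[where f=\<rho>]) (simp add: complex_eq_iff)
    moreover have "(\<lambda>tx::real. tx * D1 p) = (*) (D1 p)" by (auto simp: mult.commute)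
    ultimately show ?thesis
      unfolding has_field_derivative_def by (simp add: has_derivative_at_withinI)
  qed
  have fy: "((\<lambda>y. \<rho> (Complex x y)) has_derivative blinfun_apply (blinfun_scaleR_left (D2 (Complex x y)))) (at y within Y)"
    if "x \<in> X" "y \<in> Y" for x y
  proof -
    let ?z = "Complex x y"
    have d: "((\<lambda>t. \<rho> (?z + of_real t * \<i>)) has_real_derivative D2 ?z) (at (y + - y))"
      using partial_deriv[OF C XY[OF that], of \<i>] unfolding D2_def by simp
    have "((\<lambda>s. \<rho> (?z + of_real (s + - y) * \<i>)) has_real_derivative D2 ?z) (at y)"
      using DERIV_shift[THEN iffD1, OF d] by simp
    moreover have "(\<lambda>s. \<rho> (?z + of_real (s + - y) * \<i>)) = (\<lambda>s. \<rho> (Complex x s))"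
      by (rule ext, rule arg_cong[where f=\<rho>]) (simp add: complex_eq_iff)
    moreover have "blinfun_apply (blinfun_scaleR_left (D2 ?z)) = (*) (D2 ?z)" by (auto simp: mult.commute)
    ultimately show ?thesis
      unfolding has_field_derivative_def by (simp add: has_derivative_at_withinI)
  qed
  have cD2: "isCont D2 p"
    using cont_partial[OF C, of \<i>] U p unfolding D2_def by (simp add: continuous_on_eq_continuous_at)
  have cC: "isCont (\<lambda>(x, y). Complex x y) (Re p, Im p)"
  proof -
    have eq: "(\<lambda>(x, y). Complex x y) = (\<lambda>q. of_real (fst q) + \<i> * of_real (snd q))"
      by (auto simp: complex_eq_iff)
    show ?thesis unfolding eq by (intro continuous_intros)
  qed
  have fy_cont: "continuous (at (Re p, Im p) within X \<times> Y) (\<lambda>(x, y). blinfun_scaleR_left (D2 (Complex x y)))"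
  proof -
    have eq: "(\<lambda>(x, y). blinfun_scaleR_left (D2 (Complex x y))) = blinfun_scaleR_left \<circ> (D2 \<circ> (\<lambda>(x, y). Complex x y))"
      by (auto simp: fun_eq_iff)
    have c1: "isCont (D2 \<circ> (\<lambda>(x, y). Complex x y)) (Re p, Im p)"
      by (rule continuous_at_compose[OF cC]) (use cD2 in simp)
    have "isCont (blinfun_scaleR_left \<circ> (D2 \<circ> (\<lambda>(x, y). Complex x y))) (Re p, Im p)"
      by (rule continuous_at_compose[OF c1 linear_continuous_at[OF bounded_linear_blinfun_scaleR_left]])
    then show ?thesis unfolding eq by (rule continuous_at_imp_continuous_within)
  qed
  have Y: "Im p \<in> Y" "convex Y" using r by (auto simp: Y_def)
  have H: "((\<lambda>(x, y). \<rho> (Complex x y)) has_derivative (\<lambda>(tx, ty). tx * D1 p + ty * D2 p)) (at (Re p, Im p) within X \<times> Y)"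
    using has_derivative_partialsI[OF fx fy fy_cont Y] by simp
  have XYo: "open (X \<times> Y)" "(Re p, Im p) \<in> X \<times> Y" using r by (auto simp: X_def Y_def open_Times)
  have H': "((\<lambda>(x, y). \<rho> (Complex x y)) has_derivative (\<lambda>(tx, ty). tx * D1 p + ty * D2 p)) (at (Re p, Im p))"
    using H XYo(1) at_within_open[OF XYo(2,1)] by simp
  have L: "((\<lambda>z. (Re z, Im z)) has_derivative (\<lambda>h. (Re h, Im h))) (at p)"
    by (intro derivative_intros)
  have C2: "((\<lambda>(x, y). \<rho> (Complex x y)) \<circ> (\<lambda>z. (Re z, Im z)) has_derivative (\<lambda>(tx, ty). tx * D1 p + ty * D2 p) \<circ> (\<lambda>h. (Re h, Im h))) (at p)"
    using diff_chain_at[OF L H'] .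
  have e1: "(\<lambda>(x, y). \<rho> (Complex x y)) \<circ> (\<lambda>z. (Re z, Im z)) = \<rho>" by (rule ext) simp
  have e2: "(\<lambda>(tx, ty). tx * D1 p + ty * D2 p) \<circ> (\<lambda>h. (Re h, Im h)) = (\<lambda>h. Re h * D1 p + Im h * D2 p)"
    by (rule ext) simp
  have "(\<rho> has_derivative (\<lambda>h. Re h * D1 p + Im h * D2 p)) (at p)" using C2 unfolding e1 e2 .
  then show ?thesis unfolding D1_def D2_def .
qed



lemma dir_deriv:
  assumes C: "Cinf_on U \<rho>" and U: "open U" and p: "p \<in> U"
  shows "((\<lambda>t. \<rho> (p + of_real t * v)) has_real_derivative (grad \<rho> p \<bullet> v)) (at 0)"
proof -
  define D1 where "D1 = iter_pd [1] \<rho> p"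
  define D2 where "D2 = iter_pd [\<i>] \<rho> p"
  have F: "(\<rho> has_derivative (\<lambda>h. Re h * D1 + Im h * D2)) (at (p + of_real 0 * v))"
    using frechet[OF C U p] unfolding D1_def D2_def by simp
  have L: "((\<lambda>t. p + of_real t * v) has_derivative (\<lambda>t. of_real t * v)) (at 0)"
    by (intro derivative_eq_intros) auto
  have "((\<lambda>t. \<rho> (p + of_real t * v)) has_derivative (\<lambda>t. Re (of_real t * v) * D1 + Im (of_real t * v) * D2)) (at 0)"
    using has_derivative_compose[OF L F] .
  moreover have "(\<lambda>t. Re (of_real t * v) * D1 + Im (of_real t * v) * D2) = (*) (grad \<rho> p \<bullet> v)"
    by (rule ext) (simp add: grad_def inner_complex_def D1_def D2_def algebra_simps)
  ultimately show ?thesis unfolding has_field_derivative_def by simp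
qed

lemma ldf_facts:
  assumes "local_defining_function \<Omega> p U \<rho>"
  shows "open U" "p \<in> U" "Cinf_on U \<rho>" "\<And>z. z \<in> U \<Longrightarrow> grad \<rho> z \<noteq> 0"
    "\<And>z. z \<in> U \<Longrightarrow> z \<in> \<Omega> \<longleftrightarrow> \<rho> z < 0"
  using assms unfolding local_defining_function_def by blast+

lemma rho_zero:
  assumes L: "local_defining_function \<Omega> \<sigma> U \<rho>" and fr: "\<sigma> \<in> frontier \<Omega>" and o: "open \<Omega>"
  shows "\<rho> \<sigma> = 0"
proof -
  note F = ldf_facts[OF L]
  have "\<sigma> \<notin> \<Omega>" using fr o frontier_disjoint_eq by blast
  then have ge: "\<not> \<rho> \<sigma> < 0" using F(2,5) by blast
  have "\<sigma> \<in> closure \<Omega>" using fr by (simp add: frontier_def)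
  then obtain x where x: "\<And>n. x n \<in> \<Omega>" "x \<longlonglongrightarrow> \<sigma>" using closure_sequential by blast
  have cont: "isCont \<rho> \<sigma>" using cont_rho[OF F(3)] F(1,2) continuous_on_eq_continuous_at by blast
  have lim: "(\<lambda>n. \<rho> (x n)) \<longlonglongrightarrow> \<rho> \<sigma>" using isCont_tendsto_compose[OF cont x(2)] .
  have "eventually (\<lambda>n. x n \<in> U) sequentially" using topological_tendstoD[OF x(2) F(1,2)] .
  then have "eventually (\<lambda>n. \<rho> (x n) \<le> 0) sequentially"
    by eventually_elim (use x(1) F(5) in force)
  then have "\<rho> \<sigma> \<le> 0" using tendsto_upperbound[OF lim] by simp
  with ge show ?thesis by simp
qed

lemma cone:
  assumes L: "local_defining_function \<Omega> \<sigma> U \<rho>" and z: "\<rho> \<sigma> = 0"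
  shows "grad \<rho> \<sigma> \<bullet> v < 0 \<Longrightarrow> eventually (\<lambda>t. \<sigma> + of_real t * v \<in> \<Omega>) (at_right 0)"
    and "grad \<rho> \<sigma> \<bullet> v > 0 \<Longrightarrow> eventually (\<lambda>t. \<sigma> + of_real t * v \<notin> \<Omega>) (at_right 0)"
proof -
  note F = ldf_facts[OF L]
  have D: "((\<lambda>t. \<rho> (\<sigma> + of_real t * v)) has_real_derivative (grad \<rho> \<sigma> \<bullet> v)) (at 0)"
    using dir_deriv[OF F(3,1,2)] .
  have "((\<lambda>t. \<sigma> + of_real t * v) \<longlongrightarrow> \<sigma> + of_real 0 * v) (at_right 0)"
    by (intro tendsto_intros)
  then have "((\<lambda>t. \<sigma> + of_real t * v) \<longlongrightarrow> \<sigma>) (at_right 0)" by simp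
  then have inU: "eventually (\<lambda>t. \<sigma> + of_real t * v \<in> U) (at_right (0::real))"
    using topological_tendstoD F(1,2) by blast
  {
    assume "grad \<rho> \<sigma> \<bullet> v < 0"
    from DERIV_neg_dec_right[OF D this] obtain d where d: "d > 0"
      "\<And>h. h > 0 \<Longrightarrow> h < d \<Longrightarrow> \<rho> (\<sigma> + of_real (0 + h) * v) < \<rho> (\<sigma> + of_real 0 * v)" by blast
    have "eventually (\<lambda>t. \<rho> (\<sigma> + of_real t * v) < 0) (at_right (0::real))"
      unfolding eventually_at_right_field using d z by (intro exI[of _ d]) auto
    with inU show "eventually (\<lambda>t. \<sigma> + of_real t * v \<in> \<Omega>) (at_right 0)"
      by eventually_elim (use F(5) in blast)
  }
  {
    assume "grad \<rho> \<sigma> \<bullet> v > 0"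
    from DERIV_pos_inc_right[OF D this] obtain d where d: "d > 0"
      "\<And>h. h > 0 \<Longrightarrow> h < d \<Longrightarrow> \<rho> (\<sigma> + of_real (0 + h) * v) > \<rho> (\<sigma> + of_real 0 * v)" by blast
    have "eventually (\<lambda>t. \<rho> (\<sigma> + of_real t * v) > 0) (at_right (0::real))"
      unfolding eventually_at_right_field using d z by (intro exI[of _ d]) auto
    with inU show "eventually (\<lambda>t. \<sigma> + of_real t * v \<notin> \<Omega>) (at_right 0)"
      by eventually_elim (use F(5) in force)
  }
qed

lemma sgn_unique:
  fixes a b :: complex
  assumes a: "a \<noteq> 0" and b: "b \<noteq> 0" and H: "\<And>v. a \<bullet> v < 0 \<Longrightarrow> b \<bullet> v \<le> 0"
  shows "sgn a = sgn b"
proof (rule ccontr)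
  define u where "u = sgn a"
  define w where "w = sgn b"
  assume ne: "sgn a \<noteq> sgn b"
  have nu: "norm u = 1" "norm w = 1" using a b by (simp_all add: u_def w_def norm_sgn)
  have uu: "u \<bullet> u = 1" "w \<bullet> w = 1" using nu by (simp_all add: power2_norm_eq_inner[symmetric])
  have "u \<noteq> w" using ne u_def w_def by simp
  then have "0 < (norm (u - w))\<^sup>2" by simp
  also have "\<dots> = u \<bullet> u - 2 * (u \<bullet> w) + w \<bullet> w"
    by (simp add: power2_norm_eq_inner inner_diff_left inner_diff_right inner_commute)
  finally have uw: "u \<bullet> w < 1" using uu by simp
  have av: "a = norm a *\<^sub>R u" using a by (simp add: u_def sgn_div_norm)
  have bv: "b = norm b *\<^sub>R w" using b by (simp add: w_def sgn_div_norm)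
  have "a \<bullet> (w - u) = norm a * (u \<bullet> w - u \<bullet> u)"
    by (subst av) (simp add: inner_diff_right right_diff_distrib)
  also have "\<dots> < 0" using a uw uu by (simp add: mult_pos_neg)
  finally have "b \<bullet> (w - u) \<le> 0" by (rule H)
  moreover have "b \<bullet> (w - u) = norm b * (w \<bullet> w - w \<bullet> u)"
    by (subst bv) (simp add: inner_diff_right right_diff_distrib)
  moreover have "norm b * (w \<bullet> w - w \<bullet> u) > 0" using b uw uu by (simp add: inner_commute)
  ultimately show False by simp
qed

lemma normal_eq:
  assumes L: "local_defining_function \<Omega> \<sigma> U \<rho>" and fr: "\<sigma> \<in> frontier \<Omega>" and o: "open \<Omega>"
  shows "outward_normal \<Omega> \<sigma> = sgn (grad \<rho> \<sigma>)"
proof -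
  have key: "sgn (grad \<rho>' \<sigma>) = sgn (grad \<rho> \<sigma>)" if L': "local_defining_function \<Omega> \<sigma> U' \<rho>'" for U' \<rho>'
  proof -
    note F = ldf_facts[OF L] and F' = ldf_facts[OF L']
    have z: "\<rho> \<sigma> = 0" "\<rho>' \<sigma> = 0" using rho_zero[OF L fr o] rho_zero[OF L' fr o] by auto
    have "grad \<rho> \<sigma> \<bullet> v \<le> 0" if v: "grad \<rho>' \<sigma> \<bullet> v < 0" for v
    proof (rule ccontr)
      assume "\<not> grad \<rho> \<sigma> \<bullet> v \<le> 0"
      then have "eventually (\<lambda>t. \<sigma> + of_real t * v \<notin> \<Omega>) (at_right 0)" using cone(2)[OF L z(1)] by simp
      moreover have "eventually (\<lambda>t. \<sigma> + of_real t * v \<in> \<Omega>) (at_right 0)" using cone(1)[OF L' z(2) v] .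
      ultimately have "eventually (\<lambda>t::real. False) (at_right 0)" by eventually_elim blast
      then show False by simp
    qed
    then show ?thesis using sgn_unique F(2,4) F'(2,4) by blast
  qed
  show ?thesis unfolding outward_normal_def
  proof (rule the_equality)
    show "\<exists>U \<rho>'. local_defining_function \<Omega> \<sigma> U \<rho>' \<and> sgn (grad \<rho> \<sigma>) = grad \<rho>' \<sigma> / complex_of_real (cmod (grad \<rho>' \<sigma>))"
      using L by (auto simp: sgn_eq)
  next
    fix n assume "\<exists>U \<rho>'. local_defining_function \<Omega> \<sigma> U \<rho>' \<and> n = grad \<rho>' \<sigma> / complex_of_real (cmod (grad \<rho>' \<sigma>))"
    then obtain U' \<rho>' where "local_defining_function \<Omega> \<sigma> U' \<rho>'" "n = sgn (grad \<rho>' \<sigma>)" by (auto simp: sgn_eq)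
    then show "n = sgn (grad \<rho> \<sigma>)" using key by simp
  qed
qed

lemma dl_eq:
  "double_layer \<Omega> \<sigma> \<tau> = (outward_normal \<Omega> \<sigma> \<bullet> (\<sigma> - \<tau>)) / ((cmod (\<sigma> - \<tau>))\<^sup>2 * pi)"
  unfolding double_layer_def Re_divide' inner_complex_def by simp

lemma dl_nonneg_iff:
  assumes "\<sigma> \<noteq> \<tau>"
  shows "double_layer \<Omega> \<sigma> \<tau> \<ge> 0 \<longleftrightarrow> outward_normal \<Omega> \<sigma> \<bullet> (\<sigma> - \<tau>) \<ge> 0"
proof -
  have "(cmod (\<sigma> - \<tau>))\<^sup>2 * pi > 0" using assms by simp
  then show ?thesis unfolding dl_eq by (simp add: zero_le_divide_iff)
qed



lemma sb_facts:
  assumes "smoothly_bounded \<Omega>"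
  shows "open \<Omega>" "bounded \<Omega>" "\<And>p. p \<in> frontier \<Omega> \<Longrightarrow> \<exists>U \<rho>. local_defining_function \<Omega> p U \<rho>"
  using assms unfolding smoothly_bounded_def by blast+

theorem proposition2p3:
  fixes \<Omega> :: "complex set"
  assumes "smoothly_bounded \<Omega>"
  shows "convex \<Omega> \<longleftrightarrow>
    (\<forall>\<sigma>\<in>frontier \<Omega>. \<forall>\<tau>\<in>frontier \<Omega>. \<sigma> \<noteq> \<tau> \<longrightarrow> double_layer \<Omega> \<sigma> \<tau> \<ge> 0)"
proof
  note S = sb_facts[OF assms]
  assume cvx: "convex \<Omega>"
  show "\<forall>\<sigma>\<in>frontier \<Omega>. \<forall>\<tau>\<in>frontier \<Omega>. \<sigma> \<noteq> \<tau> \<longrightarrow> double_layer \<Omega> \<sigma> \<tau> \<ge> 0"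
  proof (intro ballI impI)
    fix \<sigma> \<tau> assume \<sigma>: "\<sigma> \<in> frontier \<Omega>" and \<tau>: "\<tau> \<in> frontier \<Omega>" and ne: "\<sigma> \<noteq> \<tau>"
    obtain U \<rho> where L: "local_defining_function \<Omega> \<sigma> U \<rho>" using S(3)[OF \<sigma>] by blast
    note F = ldf_facts[OF L]
    have z: "\<rho> \<sigma> = 0" using rho_zero[OF L \<sigma> S(1)] .
    have n: "outward_normal \<Omega> \<sigma> = sgn (grad \<rho> \<sigma>)" using normal_eq[OF L \<sigma> S(1)] .
    have cl: "\<sigma> \<in> closure \<Omega>" using \<sigma> by (simp add: frontier_def)
    have "\<sigma> \<notin> \<Omega>" using \<sigma> S(1) frontier_disjoint_eq by blast
    then have nri: "\<sigma> \<notin> rel_interior \<Omega>" by (simp add: rel_interior_open[OF S(1)])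
    obtain a where a: "a \<noteq> 0" "\<And>y. y \<in> closure \<Omega> \<Longrightarrow> a \<bullet> \<sigma> \<le> a \<bullet> y"
      by (rule supporting_hyperplane_relative_frontier[OF cvx cl nri]) blast
    define b where "b = - a"
    have b0: "b \<noteq> 0" using a by (simp add: b_def)
    have hb: "b \<bullet> y \<le> b \<bullet> \<sigma>" if "y \<in> closure \<Omega>" for y
      using a(2)[OF that] by (simp add: b_def)
    have "b \<bullet> v \<le> 0" if v: "grad \<rho> \<sigma> \<bullet> v < 0" for v
    proof -
      have "eventually (\<lambda>t. \<sigma> + of_real t * v \<in> \<Omega>) (at_right 0)" using cone(1)[OF L z v] .
      then obtain d where d: "d > 0" "\<And>t. t > 0 \<Longrightarrow> t < d \<Longrightarrow> \<sigma> + of_real t * v \<in> \<Omega>"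
        unfolding eventually_at_right_field by auto
      define t where "t = d / 2"
      have t0: "t > 0" "t < d" using d(1) by (simp_all add: t_def)
      have t: "t > 0" "\<sigma> + of_real t * v \<in> \<Omega>" using t0 d(2)[OF t0] by auto
      have "b \<bullet> (\<sigma> + of_real t * v) \<le> b \<bullet> \<sigma>" by (rule hb[OF closure_subset[THEN subsetD, OF t(2)]])
      moreover have "b \<bullet> (\<sigma> + of_real t * v) = b \<bullet> \<sigma> + t * (b \<bullet> v)"
        by (simp add: inner_complex_def algebra_simps)
      ultimately have "t * (b \<bullet> v) \<le> 0" by linarith
      then show ?thesis using t(1) by (simp add: mult_le_0_iff)
    qed
    then have sg: "sgn (grad \<rho> \<sigma>) = sgn b" by (rule sgn_unique[OF F(4)[OF F(2)] b0])
    have "b \<bullet> (\<sigma> - \<tau>) \<ge> 0" using hb[of \<tau>] \<tau> by (simp add: frontier_def inner_diff_right)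
    then have "sgn b \<bullet> (\<sigma> - \<tau>) \<ge> 0" by (simp add: sgn_div_norm)
    then show "double_layer \<Omega> \<sigma> \<tau> \<ge> 0" using dl_nonneg_iff[OF ne] n sg by simp
  qed
next
  note S = sb_facts[OF assms]
  assume H: "\<forall>\<sigma>\<in>frontier \<Omega>. \<forall>\<tau>\<in>frontier \<Omega>. \<sigma> \<noteq> \<tau> \<longrightarrow> double_layer \<Omega> \<sigma> \<tau> \<ge> 0"
  show "convex \<Omega>" unfolding convex_contains_segment
  proof (intro ballI subsetI, rule ccontr)
    fix x y q assume x: "x \<in> \<Omega>" and y: "y \<in> \<Omega>" and "q \<in> closed_segment x y" and "q \<notin> \<Omega>"
    then have "closed_segment x y \<inter> frontier \<Omega> \<noteq> {}"
      by (intro connected_Int_frontier) (auto simp: connected_segment)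
    then obtain z where zs: "z \<in> closed_segment x y" and zf: "z \<in> frontier \<Omega>" by blast
    have znot: "z \<notin> \<Omega>" using zf S(1) frontier_disjoint_eq by blast
    obtain U \<rho> where L: "local_defining_function \<Omega> z U \<rho>" using S(3)[OF zf] by blast
    note F = ldf_facts[OF L]
    define n where "n = outward_normal \<Omega> z"
    have n: "n = sgn (grad \<rho> z)" using normal_eq[OF L zf S(1)] by (simp add: n_def)
    have n0: "n \<noteq> 0" using F(2,4) n by (simp add: sgn_zero_iff)
    have nn: "n \<bullet> n > 0" using n0 by simp
    have K: "n \<bullet> (w - z) \<le> 0" if w: "w \<in> \<Omega>" for w
    proof (rule ccontr)
      assume pos: "\<not> n \<bullet> (w - z) \<le> 0"
      obtain M where M: "\<And>q. q \<in> \<Omega> \<Longrightarrow> norm q \<le> M" using S(2) bounded_iff by blast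
      define T where "T = (M + norm w + 1) / norm n"
      have "M \<ge> norm w" using M w by blast
      then have Mpos: "M + norm w + 1 > 0" using norm_ge_zero[of w] by linarith
      have Tpos: "T > 0" using n0 Mpos unfolding T_def by (simp add: divide_pos_pos)
      have "norm (T *\<^sub>R n) = M + norm w + 1"
        using n0 Mpos by (simp add: T_def)
      then have "norm (w + T *\<^sub>R n) \<ge> M + 1"
        using norm_triangle_ineq2[of "T *\<^sub>R n" "- w"] by (simp add: norm_minus_commute add.commute)
      then have out: "w + T *\<^sub>R n \<notin> \<Omega>" using M by force
      have "closed_segment w (w + T *\<^sub>R n) \<inter> frontier \<Omega> \<noteq> {}"
        using w out by (intro connected_Int_frontier) (auto simp: connected_segment)
      then obtain \<tau> where \<tau>s: "\<tau> \<in> closed_segment w (w + T *\<^sub>R n)" and \<tau>f: "\<tau> \<in> frontier \<Omega>" by blast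
      obtain s where s: "0 \<le> s" "s \<le> 1" "\<tau> = (1 - s) *\<^sub>R w + s *\<^sub>R (w + T *\<^sub>R n)"
        using \<tau>s by (auto simp: in_segment)
      have \<tau>eq: "\<tau> = w + (s * T) *\<^sub>R n" using s(3) by (simp add: algebra_simps)
      have "n \<bullet> (\<tau> - z) = n \<bullet> (w - z) + (s * T) * (n \<bullet> n)"
        by (simp add: \<tau>eq inner_diff_right inner_add_right algebra_simps)
      moreover have "(s * T) * (n \<bullet> n) \<ge> 0" using s Tpos nn by simp
      ultimately have gt: "n \<bullet> (\<tau> - z) > 0" using pos by linarith
      then have "z \<noteq> \<tau>" by auto
      then have "double_layer \<Omega> z \<tau> \<ge> 0" using H zf \<tau>f by blast
      then have "n \<bullet> (z - \<tau>) \<ge> 0" using dl_nonneg_iff[OF \<open>z \<noteq> \<tau>\<close>] n_def by simp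
      moreover have "n \<bullet> (z - \<tau>) = - (n \<bullet> (\<tau> - z))" by (simp add: inner_diff_right)
      ultimately show False using gt by simp
    qed
    obtain u where u: "0 \<le> u" "u \<le> 1" "z = (1 - u) *\<^sub>R x + u *\<^sub>R y"
      using zs by (auto simp: in_segment)
    have "u \<noteq> 1" using u y znot by auto
    then have u1: "1 - u > 0" using u by simp
    have "(1 - u) *\<^sub>R (x - z) + u *\<^sub>R (y - z) = 0" using u(3) by (simp add: algebra_simps)
    then have "n \<bullet> ((1 - u) *\<^sub>R (x - z) + u *\<^sub>R (y - z)) = 0" by simp
    then have sum0: "(1 - u) * (n \<bullet> (x - z)) + u * (n \<bullet> (y - z)) = 0" by (simp add: inner_add_right)
    have kx: "n \<bullet> (x - z) \<le> 0" using K[OF x] .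
    have ky: "u * (n \<bullet> (y - z)) \<le> 0" using K[OF y] u(1) by (simp add: mult_nonneg_nonpos)
    have "(1 - u) * (n \<bullet> (x - z)) \<le> 0" using kx u1 by (simp add: mult_pos_neg mult_nonneg_nonpos)
    then have "(1 - u) * (n \<bullet> (x - z)) = 0" using sum0 ky by linarith
    then have x0: "n \<bullet> (x - z) = 0" using u1 by simp
    obtain e where e: "e > 0" "ball x e \<subseteq> \<Omega>" using S(1) x open_contains_ball by blast
    define c where "c = e / (2 * norm n)"
    have c: "c > 0" using e n0 by (simp add: c_def)
    have "dist x (x + c *\<^sub>R n) = e / 2" using n0 e by (simp add: dist_norm c_def)
    then have "x + c *\<^sub>R n \<in> \<Omega>" using e by auto
    then have "n \<bullet> (x + c *\<^sub>R n - z) \<le> 0" by (rule K)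
    moreover have "n \<bullet> (x + c *\<^sub>R n - z) = n \<bullet> (x - z) + c * (n \<bullet> n)"
      by (simp add: inner_diff_right inner_add_right algebra_simps)
    moreover have "c * (n \<bullet> n) > 0" using c nn by simp
    ultimately show False using x0 by linarith
  qed
qed

end
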